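(* Let $\mathcal{G}=(G;T_1,T_2;\theta)\in\mathcal{G}_2^{sym}$ with $\mathcal{G}\neq\mathcal{K}_1$. Then $s_\theta$ fixes exactly one vertex of $G$, and this vertex has even degree at least $4$.
   Context: A multi-graph is finite and loop-free, possibly with parallel edges. A $2$-tree decomposition is $(G;T_1,T_2)$ with $G$ a multi-graph and $T_1,T_2$ spanning trees of $G$ whose edge sets partition $E(G)$. Let $\mathbb{Z}_2=\langle s\rangle$. A $\mathbb{Z}_2$-symmetric multi-graph is a pair $(G,\theta)$ with $\theta:\mathbb{Z}_2\to\mathrm{Aut}(G)$ a non-trivial homomorphism; write $s_\theta=\theta(s)$ and for an edge $e=v_1v_2$, $s_\theta(e)=s_\theta(v_1)s_\theta(v_2)$. A vertex $v$ (edge $e$) is fixed if $s_\theta(v)=v$ ($s_\theta(e)=e$). A symmetric $2$-tree decomposition is $(G;T_1,T_2;\theta)$ where $(G;T_1,T_2)$ is a $2$-tree decomposition, $(G,\theta)$ is $\mathbb{Z}_2$-symmetric and $s_\theta(T_i)=T_i$ for $i=1,2$. $\mathcal{G}_2^{sym}$ denotes the set of symmetric $2$-tree decompositions with no fixed edges, together with $\mathcal{K}_1=(K_1;T_1,T_2;\theta)$ where $K_1$ is a single vertex, the $T_i$ are edgeless and $\theta$ is trivial. *)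

theory Defs
  imports Main
begin

text \<open>A finite loop-free multigraph: vertex set V, edge set E, and an endpoint map
  assigning to every edge a set of exactly two distinct vertices (parallel edges allowed).\<close>
definition multigraph :: "'v set \<Rightarrow> 'e set \<Rightarrow> ('e \<Rightarrow> 'v set) \<Rightarrow> bool" where
  "multigraph V E ends \<longleftrightarrow> finite V \<and> finite E \<and>
     (\<forall>e\<in>E. ends e \<subseteq> V \<and> card (ends e) = 2)"

definition adj :: "('e \<Rightarrow> 'v set) \<Rightarrow> 'e set \<Rightarrow> ('v \<times> 'v) set" where
  "adj ends F = {(u, w). \<exists>e\<in>F. ends e = {u, w}}"

definition connected_by :: "('e \<Rightarrow> 'v set) \<Rightarrow> 'v set \<Rightarrow> 'e set \<Rightarrow> bool" where
  "connected_by ends V F \<longleftrightarrow> (\<forall>u\<in>V. \<forall>w\<in>V. (u, w) \<in> (adj ends F)\<^sup>*)"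

text \<open>Acyclic (a forest): no edge lies on a cycle, i.e. removing any edge of F
  disconnects its endpoints within F (this also excludes parallel edges in F).\<close>
definition acyclic_edges :: "('e \<Rightarrow> 'v set) \<Rightarrow> 'e set \<Rightarrow> bool" where
  "acyclic_edges ends F \<longleftrightarrow>
     (\<forall>e\<in>F. \<forall>u w. ends e = {u, w} \<longrightarrow> (u, w) \<notin> (adj ends (F - {e}))\<^sup>*)"

definition spanning_tree :: "'v set \<Rightarrow> 'e set \<Rightarrow> ('e \<Rightarrow> 'v set) \<Rightarrow> 'e set \<Rightarrow> bool" where
  "spanning_tree V E ends T \<longleftrightarrow> T \<subseteq> E \<and> connected_by ends V T \<and> acyclic_edges ends T"

definition two_tree_decomp :: "'v set \<Rightarrow> 'e set \<Rightarrow> ('e \<Rightarrow> 'v set) \<Rightarrow> 'e set \<Rightarrow> 'e set \<Rightarrow> bool" where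
  "two_tree_decomp V E ends T1 T2 \<longleftrightarrow> multigraph V E ends \<and>
     spanning_tree V E ends T1 \<and> spanning_tree V E ends T2 \<and>
     T1 \<union> T2 = E \<and> T1 \<inter> T2 = {}"

definition automorphism :: "'v set \<Rightarrow> 'e set \<Rightarrow> ('e \<Rightarrow> 'v set) \<Rightarrow> ('v \<Rightarrow> 'v) \<Rightarrow> ('e \<Rightarrow> 'e) \<Rightarrow> bool" where
  "automorphism V E ends sv se \<longleftrightarrow> bij_betw sv V V \<and> bij_betw se E E \<and>
     (\<forall>e\<in>E. ends (se e) = sv ` ends e)"

text \<open>A homomorphism theta: Z2 -> Aut(G) is determined by s_theta = theta(s), an automorphism
  with s_theta o s_theta = id. It is trivial iff s_theta is the identity automorphism.\<close>
definition z2_action :: "'v set \<Rightarrow> 'e set \<Rightarrow> ('e \<Rightarrow> 'v set) \<Rightarrow> ('v \<Rightarrow> 'v) \<Rightarrow> ('e \<Rightarrow> 'e) \<Rightarrow> bool" where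
  "z2_action V E ends sv se \<longleftrightarrow> automorphism V E ends sv se \<and>
     (\<forall>v\<in>V. sv (sv v) = v) \<and> (\<forall>e\<in>E. se (se e) = e)"

definition trivial_action :: "'v set \<Rightarrow> 'e set \<Rightarrow> ('v \<Rightarrow> 'v) \<Rightarrow> ('e \<Rightarrow> 'e) \<Rightarrow> bool" where
  "trivial_action V E sv se \<longleftrightarrow> (\<forall>v\<in>V. sv v = v) \<and> (\<forall>e\<in>E. se e = e)"

definition z2_symmetric :: "'v set \<Rightarrow> 'e set \<Rightarrow> ('e \<Rightarrow> 'v set) \<Rightarrow> ('v \<Rightarrow> 'v) \<Rightarrow> ('e \<Rightarrow> 'e) \<Rightarrow> bool" where
  "z2_symmetric V E ends sv se \<longleftrightarrow> multigraph V E ends \<and> z2_action V E ends sv se \<and>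
     \<not> trivial_action V E sv se"

definition sym_two_tree_decomp where
  "sym_two_tree_decomp V E ends T1 T2 sv se \<longleftrightarrow>
     two_tree_decomp V E ends T1 T2 \<and> z2_symmetric V E ends sv se \<and>
     se ` T1 = T1 \<and> se ` T2 = T2"

definition no_fixed_edges :: "'e set \<Rightarrow> ('e \<Rightarrow> 'e) \<Rightarrow> bool" where
  "no_fixed_edges E se \<longleftrightarrow> (\<forall>e\<in>E. se e \<noteq> e)"

definition is_K1 where
  "is_K1 V E ends T1 T2 sv se \<longleftrightarrow> card V = 1 \<and> E = {} \<and> T1 = {} \<and> T2 = {} \<and>
     trivial_action V E sv se"

definition in_G2sym where
  "in_G2sym V E ends T1 T2 sv se \<longleftrightarrow>
     (sym_two_tree_decomp V E ends T1 T2 sv se \<and> no_fixed_edges E se) \<or>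
     is_K1 V E ends T1 T2 sv se"

definition degree :: "'e set \<Rightarrow> ('e \<Rightarrow> 'v set) \<Rightarrow> 'v \<Rightarrow> nat" where
  "degree E ends v = card {e\<in>E. v \<in> ends e}"

end

theory Submission
  imports Defs "HOL-Library.Transitive_Closure_Table"
begin

lemma adj_sym: "(x,y) \<in> adj ends F \<Longrightarrow> (y,x) \<in> adj ends F"
  by (auto simp: adj_def insert_commute)

lemma rtrancl_adj_sym: "(x,y) \<in> (adj ends F)\<^sup>* \<Longrightarrow> (y,x) \<in> (adj ends F)\<^sup>*"
proof (induct rule: rtrancl_induct)
  case base then show ?case by simp
next
  case (step y z) then show ?case
    by (meson adj_sym converse_rtrancl_into_rtrancl)
qed

lemma path_Cons_iff: "rtrancl_path r x (y # ys) z \<longleftrightarrow> r x y \<and> rtrancl_path r y ys z"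
  by (auto elim: rtrancl_path.cases intro: rtrancl_path.step)

lemma path_Nil_iff: "rtrancl_path r x [] z \<longleftrightarrow> x = z"
  by (auto elim: rtrancl_path.cases intro: rtrancl_path.base)

lemma path_snoc:
  "rtrancl_path r x (xs @ [z]) z' \<Longrightarrow> rtrancl_path r x xs (last (x#xs)) \<and> r (last (x#xs)) z \<and> z = z'"
proof (induct xs arbitrary: x)
  case Nil then show ?case by (auto simp add: path_Cons_iff path_Nil_iff rtrancl_path.base)
next
  case (Cons a xs)
  from Cons.prems have xa: "r x a" and ap: "rtrancl_path r a (xs @ [z]) z'" by (auto simp: path_Cons_iff)
  from Cons.hyps[OF ap] have "rtrancl_path r a xs (last (a#xs))" "r (last (a#xs)) z" "z = z'" by auto
  then show ?case using xa by (simp add: path_Cons_iff)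
qed

lemma path_last: "rtrancl_path r x xs y \<Longrightarrow> xs \<noteq> [] \<Longrightarrow> last xs = y"
  by (induct rule: rtrancl_path.induct) (auto elim: rtrancl_path.cases)

lemma walk_avoid:
  assumes "rtrancl_path (\<lambda>x y. (x,y) \<in> adj ends T) x qs y" "u \<in> ends e0" "u \<notin> set (x#qs)"
  shows "(x,y) \<in> (adj ends (T - {e0}))\<^sup>*"
  using assms
proof (induct rule: rtrancl_path.induct)
  case (base x) then show ?case by simp
next
  case (step x y ys z)
  from step(1) obtain e where e: "e \<in> T" "ends e = {x,y}" by (auto simp: adj_def)
  have "e \<noteq> e0" using e step(4,5) by auto
  then have "(x,y) \<in> adj ends (T - {e0})" using e by (auto simp: adj_def)
  moreover have "(y,z) \<in> (adj ends (T - {e0}))\<^sup>*" using step by auto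
  ultimately show ?case by (rule converse_rtrancl_into_rtrancl)
qed

lemma walk_map:
  assumes "rtrancl_path (\<lambda>x y. (x,y) \<in> adj ends T) x qs y"
    "\<forall>e\<in>T. se e \<in> T \<and> ends (se e) = sv ` ends e"
  shows "rtrancl_path (\<lambda>x y. (x,y) \<in> adj ends T) (sv x) (map sv qs) (sv y)"
  using assms
proof (induct rule: rtrancl_path.induct)
  case (base x) then show ?case by (simp add: rtrancl_path.base)
next
  case (step x y ys z)
  from step(1) obtain e where e: "e \<in> T" "ends e = {x,y}" by (auto simp: adj_def)
  have "se e \<in> T" "ends (se e) = {sv x, sv y}" using e step(4) by auto
  then have "(sv x, sv y) \<in> adj ends T" unfolding adj_def by blast
  moreover have "rtrancl_path (\<lambda>x y. (x,y) \<in> adj ends T) (sv y) (map sv ys) (sv z)"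
    using step(3,4) by blast
  ultimately show ?case by (simp add: path_Cons_iff)
qed

lemma walk_in_V:
  assumes "rtrancl_path (\<lambda>x y. (x,y) \<in> adj ends T) x qs y" "\<forall>e\<in>T. ends e \<subseteq> V"
  shows "set qs \<subseteq> V"
  using assms
proof (induct rule: rtrancl_path.induct)
  case (base x) then show ?case by simp
next
  case (step x y ys z)
  from step(1) obtain e where e: "e \<in> T" "ends e = {x,y}" by (auto simp: adj_def)
  then show ?case using step by auto
qed

locale invtree =
  fixes V :: "'v set" and T :: "'e set" and ends :: "'e \<Rightarrow> 'v set"
    and sv :: "'v \<Rightarrow> 'v" and se :: "'e \<Rightarrow> 'e"
  assumes ends_V: "\<forall>e\<in>T. ends e \<subseteq> V \<and> card (ends e) = 2"
    and conn: "connected_by ends V T"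
    and acyc: "acyclic_edges ends T"
    and svV: "\<forall>v\<in>V. sv v \<in> V \<and> sv (sv v) = v"
    and seT: "\<forall>e\<in>T. se e \<in> T \<and> ends (se e) = sv ` ends e \<and> se e \<noteq> e"
begin

abbreviation "R \<equiv> (\<lambda>x y. (x,y) \<in> adj ends T)"

lemma acyc': "e \<in> T \<Longrightarrow> ends e = {u,w} \<Longrightarrow> (u,w) \<in> (adj ends (T - {e}))\<^sup>* \<Longrightarrow> False"
proof -
  assume a: "e \<in> T" "ends e = {u,w}" "(u,w) \<in> (adj ends (T - {e}))\<^sup>*"
  have "\<forall>e\<in>T. \<forall>u w. ends e = {u, w} \<longrightarrow> (u, w) \<notin> (adj ends (T - {e}))\<^sup>*"
    using acyc by (simp add: acyclic_edges_def)
  then show False using a by blast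
qed

lemma adjV: "(x,y) \<in> adj ends T \<Longrightarrow> x \<in> V \<and> y \<in> V \<and> x \<noteq> y"
proof -
  assume "(x,y) \<in> adj ends T"
  then obtain e where e: "e \<in> T" "ends e = {x,y}" by (auto simp: adj_def)
  then show ?thesis using ends_V by (cases "x = y") auto
qed

lemma get_path:
  assumes "x \<in> V" "y \<in> V"
  obtains ps where "rtrancl_path R x ps y" "distinct (x#ps)"
proof -
  have "(x,y) \<in> (adj ends T)\<^sup>*" using conn assms unfolding connected_by_def by blast
  then have "R\<^sup>*\<^sup>* x y" by (simp add: rtranclp_rtrancl_eq)
  then obtain xs where "rtrancl_path R x xs y" by (auto simp: rtranclp_eq_rtrancl_path)
  then obtain xs' where "rtrancl_path R x xs' y" "distinct (x # xs')" by (rule rtrancl_path_distinct)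
  then show ?thesis by (rule that)
qed

lemma unique_fix:
  assumes "u \<in> V" "w \<in> V" "sv u = u" "sv w = w"
  shows "u = w"
proof (rule ccontr)
  assume uw: "u \<noteq> w"
  obtain ps where p: "rtrancl_path R u ps w" "distinct (u#ps)" using get_path assms by blast
  have "ps \<noteq> []" using p uw by (auto simp: path_Nil_iff)
  then obtain p1 qs where ps: "ps = p1 # qs" by (cases ps) auto
  have up1: "R u p1" and pq: "rtrancl_path R p1 qs w" using p ps by (auto simp: path_Cons_iff)
  obtain e0 where e0: "e0 \<in> T" "ends e0 = {u,p1}" using up1 by (auto simp: adj_def)
  have p1V: "p1 \<in> V" using adjV up1 by blast
  have qsV: "set qs \<subseteq> V" using walk_in_V[OF pq] ends_V by blast
  have "u \<in> ends e0" using e0 by auto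
  have 1: "(p1, w) \<in> (adj ends (T - {e0}))\<^sup>*"
    by (rule walk_avoid[OF pq \<open>u \<in> ends e0\<close>]) (use p ps in auto)
  have im: "rtrancl_path R (sv p1) (map sv qs) w"
    using walk_map[where se=se and sv=sv, OF pq] seT assms by auto
  have "u \<notin> set (sv p1 # map sv qs)"
  proof
    assume "u \<in> set (sv p1 # map sv qs)"
    then obtain z where z: "z \<in> set (p1 # qs)" "sv z = u" by auto
    then have "z \<in> V" using p1V qsV by auto
    then have "z = u" using z svV assms by metis
    then show False using z p ps by auto
  qed
  then have "(sv p1, w) \<in> (adj ends (T - {e0}))\<^sup>*"
    using walk_avoid[OF im \<open>u \<in> ends e0\<close>] by blast
  then have 2: "(w, sv p1) \<in> (adj ends (T - {e0}))\<^sup>*" by (rule rtrancl_adj_sym)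
  have "se e0 \<in> T" "ends (se e0) = {u, sv p1}" "se e0 \<noteq> e0" using seT e0 assms by auto
  then have "(sv p1, u) \<in> adj ends (T - {e0})" unfolding adj_def by (auto simp: insert_commute)
  then have "(p1, u) \<in> (adj ends (T - {e0}))\<^sup>*" using 1 2
    by (meson rtrancl_into_rtrancl rtrancl_trans)
  then have "(u, p1) \<in> (adj ends (T - {e0}))\<^sup>*" by (rule rtrancl_adj_sym)
  then show False using acyc'[OF e0(1,2)] by blast
qed

lemma exists_fix:
  assumes "V \<noteq> {}"
  shows "\<exists>v\<in>V. sv v = v"
proof (rule ccontr)
  assume nofix: "\<not> (\<exists>v\<in>V. sv v = v)"
  define P where "P n \<longleftrightarrow> (\<exists>a\<in>V. \<exists>ps. rtrancl_path R a ps (sv a) \<and> distinct (a#ps) \<and> length ps = n)" for n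
  obtain a0 where a0: "a0 \<in> V" using assms by blast
  obtain ps0 where "rtrancl_path R a0 ps0 (sv a0)" "distinct (a0#ps0)"
    using get_path a0 svV by blast
  then have "P (length ps0)" using a0 unfolding P_def by blast
  define n where "n = (LEAST n. P n)"
  have "P n" unfolding n_def by (rule LeastI) fact
  then obtain a ps where aV: "a \<in> V" and p: "rtrancl_path R a ps (sv a)" "distinct (a#ps)"
    and len: "length ps = n" unfolding P_def by blast
  have min: "\<And>m. m < n \<Longrightarrow> \<not> P m" unfolding n_def by (rule not_less_Least)
  have sva: "sv a \<noteq> a" "sv a \<in> V" "sv (sv a) = a" using nofix aV svV by auto
  have "ps \<noteq> []" using p sva by (auto simp: path_Nil_iff)
  then obtain p1 qs where ps: "ps = p1 # qs" by (cases ps) auto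
  have up1: "R a p1" and pq: "rtrancl_path R p1 qs (sv a)" using p ps by (auto simp: path_Cons_iff)
  obtain e0 where e0: "e0 \<in> T" "ends e0 = {a,p1}" using up1 by (auto simp: adj_def)
  have p1V: "p1 \<in> V" using adjV up1 by blast
  have ae0: "a \<in> ends e0" using e0 by auto
  have se0: "se e0 \<in> T" "ends (se e0) = {sv a, sv p1}" "se e0 \<noteq> e0" using seT e0 by auto
  show False
  proof (cases "qs = []")
    case True
    then have "p1 = sv a" using pq by (simp add: path_Nil_iff)
    then have "ends (se e0) = {a, p1}" using se0 sva by auto
    then have "(a, p1) \<in> adj ends (T - {e0})" using se0 unfolding adj_def by auto
    then show False using acyc'[OF e0(1,2)] by blast
  next
    case False
    have "last qs = sv a" by (rule path_last[OF pq False])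
    then obtain ms where qs: "qs = ms @ [sv a]" using False by (metis append_butlast_last_id)
    define y where "y = last (p1 # ms)"
    have pm: "rtrancl_path R p1 ms y" and ysa: "R y (sv a)"
      using path_snoc[of R p1 ms "sv a" "sv a"] pq qs unfolding y_def by auto
    have dist: "distinct (a # p1 # ms @ [sv a])" using p ps qs by simp
    have msV: "set ms \<subseteq> V" using walk_in_V[OF pm] ends_V by blast
    have yin: "y \<in> set (p1 # ms)" unfolding y_def by simp
    have yV: "y \<in> V" using yin msV p1V by auto
    have ya: "y \<noteq> a" "y \<noteq> sv a" using yin dist by auto
    show False
    proof (cases "sv y = p1")
      case True
      then have "y = sv p1" using svV yV by metis
      then have "P (length ms)" unfolding P_def using p1V pm dist by auto
      moreover have "length ms < n" using len ps qs by simp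
      ultimately show False using min by blast
    next
      case False
      have 1: "(p1, y) \<in> (adj ends (T - {e0}))\<^sup>*"
        by (rule walk_avoid[OF pm ae0]) (use dist in auto)
      obtain e' where e': "e' \<in> T" "ends e' = {y, sv a}" using ysa by (auto simp: adj_def)
      have "e' \<noteq> e0" using e' e0 ya sva by auto
      then have 2: "(y, sv a) \<in> adj ends (T - {e0})" using e' unfolding adj_def by auto
      have 3: "(sv a, sv p1) \<in> adj ends (T - {e0})" using se0 unfolding adj_def by auto
      have im: "rtrancl_path R (sv p1) (map sv ms) (sv y)"
        using walk_map[where se=se and sv=sv, OF pm] seT by auto
      have "a \<notin> set (sv p1 # map sv ms)"
      proof
        assume "a \<in> set (sv p1 # map sv ms)"
        then obtain z where z: "z \<in> set (p1 # ms)" "sv z = a" by auto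
        then have "z \<in> V" using p1V msV by auto
        then have "z = sv a" using z svV by metis
        then show False using z dist by auto
      qed
      then have 4: "(sv p1, sv y) \<in> (adj ends (T - {e0}))\<^sup>*"
        using walk_avoid[OF im ae0] by blast
      have sey: "se e' \<in> T" "ends (se e') = {sv y, a}" using seT e' sva by auto
      have "sv y \<noteq> a" using svV yV ya by metis
      then have "se e' \<noteq> e0" using sey e0 False by (metis doubleton_eq_iff)
      then have 5: "(sv y, a) \<in> adj ends (T - {e0})" using sey unfolding adj_def by auto
      have "(p1, a) \<in> (adj ends (T - {e0}))\<^sup>*" using 1 2 3 4 5
        by (meson rtrancl_into_rtrancl rtrancl_trans)
      then have "(a, p1) \<in> (adj ends (T - {e0}))\<^sup>*" by (rule rtrancl_adj_sym)
      then show False using acyc'[OF e0(1,2)] by blast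
    qed
  qed
qed

end

lemma even_inv:
  "finite S \<Longrightarrow> (\<forall>x\<in>S. f x \<in> S \<and> f (f x) = x \<and> f x \<noteq> x) \<Longrightarrow> even (card S)"
proof (induction S rule: finite_psubset_induct)
  case (psubset S)
  show ?case
  proof (cases "S = {}")
    case True then show ?thesis by simp
  next
    case False then obtain x where x: "x \<in> S" by blast
    let ?S' = "S - {x, f x}"
    have fx: "f x \<in> S" "f x \<noteq> x" "f (f x) = x" using psubset.prems x by auto
    have "?S' \<subset> S" using x by auto
    moreover have "\<forall>y\<in>?S'. f y \<in> ?S' \<and> f (f y) = y \<and> f y \<noteq> y"
    proof
      fix y assume y: "y \<in> ?S'"
      then have y': "y \<in> S" "y \<noteq> x" "y \<noteq> f x" by auto
      have "f y \<noteq> x" using y' psubset.prems by metis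
      moreover have "f y \<noteq> f x" using y' psubset.prems fx by metis
      ultimately show "f y \<in> ?S' \<and> f (f y) = y \<and> f y \<noteq> y" using y' psubset.prems by auto
    qed
    ultimately have "even (card ?S')" using psubset.IH by blast
    moreover have "card ?S' = card S - 2"
      using x fx psubset.hyps by (subst card_Diff_subset) auto
    moreover have "card S \<ge> 2"
    proof -
      have "card {x, f x} \<le> card S" using x fx psubset.hyps by (intro card_mono) auto
      then show ?thesis using fx by simp
    qed
    ultimately show ?thesis by presburger
  qed
qed

theorem lemma5p2:
  fixes V :: "'v set" and E :: "'e set" and ends :: "'e \<Rightarrow> 'v set"
    and T1 T2 :: "'e set" and sv :: "'v \<Rightarrow> 'v" and se :: "'e \<Rightarrow> 'e"
  assumes "in_G2sym V E ends T1 T2 sv se"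
    and "\<not> is_K1 V E ends T1 T2 sv se"
  shows "\<exists>v\<in>V. sv v = v \<and> (\<forall>u\<in>V. sv u = u \<longrightarrow> u = v) \<and>
           even (degree E ends v) \<and> degree E ends v \<ge> 4"
proof -
  have S: "sym_two_tree_decomp V E ends T1 T2 sv se" and nf: "no_fixed_edges E se"
    using assms unfolding in_G2sym_def by auto
  have mg: "finite V" "finite E" "\<forall>e\<in>E. ends e \<subseteq> V \<and> card (ends e) = 2"
    using S unfolding sym_two_tree_decomp_def two_tree_decomp_def multigraph_def by auto
  have st1: "T1 \<subseteq> E" "connected_by ends V T1" "acyclic_edges ends T1"
    and st2: "T2 \<subseteq> E" "connected_by ends V T2" "acyclic_edges ends T2"
    and un: "T1 \<union> T2 = E" "T1 \<inter> T2 = {}"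
    using S unfolding sym_two_tree_decomp_def two_tree_decomp_def spanning_tree_def by auto
  have aut: "bij_betw sv V V" "bij_betw se E E" "\<forall>e\<in>E. ends (se e) = sv ` ends e"
    and inv: "\<forall>v\<in>V. sv (sv v) = v" "\<forall>e\<in>E. se (se e) = e"
    and ntriv: "\<not> trivial_action V E sv se"
    using S unfolding sym_two_tree_decomp_def z2_symmetric_def z2_action_def automorphism_def
    by auto
  have img: "se ` T1 = T1" "se ` T2 = T2" using S unfolding sym_two_tree_decomp_def by auto
  have nfe: "\<forall>e\<in>E. se e \<noteq> e" using nf unfolding no_fixed_edges_def .
  have svV: "\<forall>v\<in>V. sv v \<in> V \<and> sv (sv v) = v" using aut(1) inv(1) unfolding bij_betw_def by auto
  have seT: "\<forall>e\<in>T. se e \<in> T \<and> ends (se e) = sv ` ends e \<and> se e \<noteq> e"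
    if "T \<subseteq> E" "se ` T = T" for T
  proof
    fix e assume e: "e \<in> T"
    then have "se e \<in> se ` T" by (rule imageI)
    then have "se e \<in> T" using that(2) by simp
    moreover have "e \<in> E" using e that(1) by blast
    ultimately show "se e \<in> T \<and> ends (se e) = sv ` ends e \<and> se e \<noteq> e" using aut(3) nfe by blast
  qed
  interpret I1: invtree V T1 ends sv se
    using st1 mg svV seT[OF st1(1) img(1)] by unfold_locales blast+
  interpret I2: invtree V T2 ends sv se
    using st2 mg svV seT[OF st2(1) img(2)] by unfold_locales blast+
  have VE: "E = {}" if "V \<subseteq> {v}" for v
  proof (rule ccontr)
    assume "E \<noteq> {}"
    then obtain e where "e \<in> E" by blast
    then have "ends e \<subseteq> {v}" "card (ends e) = 2" using mg that by auto
    then show False using card_mono[of "{v}" "ends e"] by simp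
  qed
  have "V \<noteq> {}"
  proof
    assume "V = {}"
    then have "E = {}" using VE by blast
    then show False using ntriv \<open>V = {}\<close> unfolding trivial_action_def by auto
  qed
  then obtain v where v: "v \<in> V" "sv v = v" using I1.exists_fix by blast
  have uniq: "\<forall>u\<in>V. sv u = u \<longrightarrow> u = v" using I1.unique_fix v by blast
  obtain w where w: "w \<in> V" "w \<noteq> v"
  proof (rule ccontr)
    assume "\<not> thesis"
    then have "V \<subseteq> {v}" using that by blast
    then have "E = {}" using VE by blast
    then show False using ntriv \<open>V \<subseteq> {v}\<close> v unfolding trivial_action_def by auto
  qed
  define D1 where "D1 = {e\<in>T1. v \<in> ends e}"
  define D2 where "D2 = {e\<in>T2. v \<in> ends e}"
  have Dfin: "finite D1" "finite D2" using mg(2) st1(1) st2(1) unfolding D1_def D2_def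
    by (auto intro: finite_subset)
  have deg: "degree E ends v = card D1 + card D2"
  proof -
    have "{e\<in>E. v \<in> ends e} = D1 \<union> D2" using un unfolding D1_def D2_def by auto
    moreover have "D1 \<inter> D2 = {}" using un unfolding D1_def D2_def by auto
    ultimately show ?thesis unfolding degree_def using Dfin by (simp add: card_Un_disjoint)
  qed
  have evD: "even (card {e\<in>T. v \<in> ends e})" if "T \<subseteq> E" "se ` T = T" for T
  proof (rule even_inv[where f = se])
    show "finite {e\<in>T. v \<in> ends e}" using mg(2) that by (auto intro: finite_subset)
    show "\<forall>x\<in>{e\<in>T. v \<in> ends e}. se x \<in> {e\<in>T. v \<in> ends e} \<and> se (se x) = x \<and> se x \<noteq> x"
    proof
      fix x assume x: "x \<in> {e\<in>T. v \<in> ends e}"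
      then have "x \<in> E" using that by auto
      have xT: "x \<in> T" "v \<in> ends x" using x by auto
      have "se x \<in> se ` T" using xT(1) by (rule imageI)
      then have 1: "se x \<in> T" using that(2) by simp
      have "sv v \<in> sv ` ends x" using xT(2) by (rule imageI)
      then have 2: "v \<in> ends (se x)" using aut(3) \<open>x \<in> E\<close> v(2) by simp
      show "se x \<in> {e\<in>T. v \<in> ends e} \<and> se (se x) = x \<and> se x \<noteq> x"
        using 1 2 inv(2) nfe \<open>x \<in> E\<close> by simp
    qed
  qed
  have neD: "card {e\<in>T. v \<in> ends e} \<noteq> 0"
    if "T \<subseteq> E" "connected_by ends V T" for T
  proof -
    have "(v, w) \<in> (adj ends T)\<^sup>*" using that v w unfolding connected_by_def by blast
    then obtain x where "(v, x) \<in> adj ends T" using w(2) by (metis converse_rtranclE)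
    then obtain e where e: "e \<in> T" "ends e = {v, x}" unfolding adj_def by blast
    have "finite {e\<in>T. v \<in> ends e}" using mg(2) that by (auto intro: finite_subset)
    moreover have "e \<in> {e\<in>T. v \<in> ends e}" using e by auto
    ultimately show ?thesis by auto
  qed
  have "even (card D1)" "even (card D2)" unfolding D1_def D2_def using evD st1 st2 img by auto
  moreover have "card D1 \<noteq> 0" "card D2 \<noteq> 0" unfolding D1_def D2_def using neD st1 st2 by auto
  ultimately have "even (degree E ends v)" "degree E ends v \<ge> 4" unfolding deg by presburger+
  then show ?thesis using v uniq by blast
qed

end
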